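(* Let $V$ be a real finite-dimensional inner product space and let $(g(x))_{x\ge0}$ be a semigroup on $V$ satisfying the boundedness assumption. Let $V=V_1\oplus V_2$ be a decomposition into $g$-invariant subspaces with $g(x)|_{V_1}$ invertible for all $x\ge0$ and $g(x)|_{V_2}=0$ for all $x>0$. Then $V_1\perp V_2$.
   Context: A semigroup is a map $g:[0,\infty)\to L(V)$ with $g(0)=\mathrm{id}$ and $g(x+y)=g(x)g(y)$ for all $x,y\ge0$. Boundedness assumption: there is a locally bounded function $f:[0,\infty)\to\mathbb R$, right-continuous at $0$, with $f(0)=1$, such that $\|g(x)\|_{\mathrm{op}}\le f(x)$ for all $x\ge0$, where $\|\cdot\|_{\mathrm{op}}$ is the operator norm induced by the inner product. *)

theory Defs
  imports "HOL-Analysis.Analysis"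
begin

definition op_semigroup :: "(real \<Rightarrow> 'a::real_vector \<Rightarrow> 'a) \<Rightarrow> bool" where
  "op_semigroup g \<longleftrightarrow> (\<forall>x\<ge>0. linear (g x)) \<and> g 0 = id \<and>
     (\<forall>x y. x \<ge> 0 \<longrightarrow> y \<ge> 0 \<longrightarrow> g (x + y) = g x \<circ> g y)"

definition bounded_semigroup :: "(real \<Rightarrow> 'a::real_normed_vector \<Rightarrow> 'a) \<Rightarrow> bool" where
  "bounded_semigroup g \<longleftrightarrow> (\<exists>f :: real \<Rightarrow> real.
     (\<forall>T\<ge>0. \<exists>M. \<forall>x\<in>{0..T}. \<bar>f x\<bar> \<le> M) \<and>
     (f \<longlongrightarrow> f 0) (at_right 0) \<and> f 0 = 1 \<and>
     (\<forall>x\<ge>0. onorm (g x) \<le> f x))"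

end

theory Submission
  imports Defs
begin

lemma orth_from_norm:
  fixes u v :: "'a::real_inner"
  assumes "\<And>t::real. norm u \<le> norm (u + t *\<^sub>R v)"
  shows "inner u v = 0"
proof -
  define a where "a = inner u v"
  define b where "b = inner v v"
  have b0: "b \<ge> 0" unfolding b_def by simp
  define t where "t = - a / (b + 1)"
  have "(norm u)^2 \<le> (norm (u + t *\<^sub>R v))^2"
    using assms[of t] by (simp add: power_mono)
  also have "\<dots> = inner (u + t *\<^sub>R v) (u + t *\<^sub>R v)"
    by (rule power2_norm_eq_inner)
  also have "\<dots> = inner u u + 2 * t * a + t^2 * b"
    by (simp add: inner_add_left inner_add_right a_def b_def
        inner_commute algebra_simps power2_eq_square)
  also have "inner u u = (norm u)^2" by (simp add: power2_norm_eq_inner)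
  finally have h: "0 \<le> 2 * t * a + t^2 * b" by simp
  have tb: "t * (b + 1) = - a" using b0 by (simp add: t_def)
  have "(2 * t * a + t^2 * b) * (b+1)^2 = 2*a*(t*(b+1))*(b+1) + b*(t*(b+1))^2"
    by (simp add: algebra_simps power2_eq_square)
  also have "\<dots> = 2*a*(-a)*(b+1) + b*(-a)^2"
    by (simp only: tb)
  also have "\<dots> = a^2 * (- 2 * (b+1) + b)"
    by (simp add: algebra_simps power2_eq_square)
  finally have eq: "(2 * t * a + t^2 * b) * (b+1)^2 = a^2 * (- 2 * (b+1) + b)" .
  have "0 \<le> (2 * t * a + t^2 * b) * (b+1)^2" using h by simp
  hence "0 \<le> a^2 * (- 2 * (b+1) + b)" using eq by simp
  moreover have k: "- 2 * (b+1) + b < 0" using b0 by simp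
  moreover have "a^2 * (- 2 * (b+1) + b) \<le> 0"
    by (rule mult_nonneg_nonpos) (use k in auto)
  ultimately have "a^2 * (- 2 * (b+1) + b) = 0" by linarith
  hence "a^2 = 0" using k by simp
  thus ?thesis unfolding a_def by simp
qed

theorem mainTheorem12:
  fixes g :: "real \<Rightarrow> 'a::euclidean_space \<Rightarrow> 'a"
    and V1 V2 :: "'a set"
  assumes "op_semigroup g" and "bounded_semigroup g"
    and "subspace V1" and "subspace V2"
    and "V1 \<inter> V2 = {0}" and "{u + v | u v. u \<in> V1 \<and> v \<in> V2} = UNIV"
    and "\<forall>x\<ge>0. g x ` V1 \<subseteq> V1" and "\<forall>x\<ge>0. g x ` V2 \<subseteq> V2"
    and "\<forall>x\<ge>0. bij_betw (g x) V1 V1"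
    and "\<forall>x>0. \<forall>v\<in>V2. g x v = 0"
  shows "\<forall>u\<in>V1. \<forall>v\<in>V2. inner u v = 0"
proof -
  have lin: "\<And>x. x \<ge> 0 \<Longrightarrow> linear (g x)"
    and comp: "\<And>x y. x \<ge> 0 \<Longrightarrow> y \<ge> 0 \<Longrightarrow> g (x + y) = g x \<circ> g y"
    using assms(1) unfolding op_semigroup_def by auto
  have bl: "\<And>x. x \<ge> 0 \<Longrightarrow> bounded_linear (g x)"
    using lin linear_conv_bounded_linear by blast
  obtain f :: "real \<Rightarrow> real" where floc: "\<forall>T\<ge>0. \<exists>M. \<forall>x\<in>{0..T}. \<bar>f x\<bar> \<le> M"
    and flim: "(f \<longlongrightarrow> f 0) (at_right 0)" and f0: "f 0 = 1"
    and fb: "\<forall>x\<ge>0. onorm (g x) \<le> f x"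
    using assms(2) unfolding bounded_semigroup_def by blast
  obtain M where M: "\<forall>x\<in>{0..1}. \<bar>f x\<bar> \<le> M" using floc by force
  have nb: "norm (g x z) \<le> M * norm z" if "0 \<le> x" "x \<le> 1" for x z
  proof -
    have "norm (g x z) \<le> onorm (g x) * norm z" using onorm bl that by blast
    also have "\<dots> \<le> M * norm z"
      apply (rule mult_right_mono)
      using fb M that by force+
    finally show ?thesis .
  qed
  have nbf: "norm (g x z) \<le> f x * norm z" if "0 \<le> x" for x z
  proof -
    have "norm (g x z) \<le> onorm (g x) * norm z" using onorm bl that by blast
    also have "\<dots> \<le> f x * norm z"
      apply (rule mult_right_mono)
      using fb that by force+
    finally show ?thesis .
  qed
  have inj1: "\<forall>w\<in>V1. g 1 w = 0 \<longrightarrow> w = 0"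
  proof (intro ballI impI)
    fix w assume w: "w \<in> V1" "g 1 w = 0"
    have "bij_betw (g 1) V1 V1" using assms(9) by simp
    hence "inj_on (g 1) V1" by (rule bij_betw_imp_inj_on)
    moreover have "g 1 0 = 0" using lin[of 1] linear_0 by simp
    moreover have "0 \<in> V1" using assms(3) subspace_0 by blast
    ultimately show "w = 0" using w inj_on_def by metis
  qed
  obtain c where c: "c > 0" "\<forall>w\<in>V1. norm (g 1 w) \<ge> c * norm w"
    using injective_imp_isometric[OF closed_subspace[OF assms(3)] assms(3) bl[of 1] inj1]
    by auto
  have lower: "c * norm w \<le> M * norm (g x w)" if "0 < x" "x \<le> 1" "w \<in> V1" for x w
  proof -
    have "g 1 w = g (1 - x) (g x w)" using comp[of "1-x" x] that by simp
    hence "norm (g 1 w) \<le> M * norm (g x w)" using nb[of "1-x"] that by simp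
    thus ?thesis using c that by force
  qed
  have key: "\<exists>s. 0 < s \<and> s < \<delta> \<and> norm (g s u - u) \<le> \<epsilon>"
    if u: "u \<in> V1" and e: "\<epsilon> > 0" and d: "0 < \<delta>" "\<delta> \<le> 1" for u \<epsilon> \<delta>
  proof -
    define t where "t n = \<delta> / (real n + 1)" for n :: nat
    have t: "0 < t n" "t n \<le> 1" for n
      using d by (auto simp: t_def field_simps)
    have tdec: "t m > t n" if "m < n" for m n
      using d that by (auto simp: t_def field_simps)
    have ex: "\<exists>y. y \<in> V1 \<and> g (t n) y = u" for n
    proof -
      have "bij_betw (g (t n)) V1 V1" using assms(9) t[of n] by simp
      hence "g (t n) ` V1 = V1" by (rule bij_betw_imp_surj_on)
      thus ?thesis using u by force
    qed
    define y where "y n = (SOME y. y \<in> V1 \<and> g (t n) y = u)" for n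
    have y: "y n \<in> V1" "g (t n) (y n) = u" for n
      using someI_ex[OF ex[of n]] unfolding y_def by auto
    have ybd: "norm (y n) \<le> M * norm u / c" for n
      using lower[OF t(1) t(2) y(1), of n n] y(2)[of n] c(1)
      by (simp add: field_simps)
    have "bounded (range y)"
      unfolding bounded_iff using ybd by blast
    then obtain l r where r: "strict_mono r" and lim: "(y \<circ> r) \<longlonglongrightarrow> l"
      using bounded_imp_convergent_subsequence by blast
    have "Cauchy (y \<circ> r)" using lim LIMSEQ_imp_Cauchy by blast
    moreover have pos: "\<epsilon> / (\<bar>M\<bar> + 1) > 0" using e by (simp add: add_nonneg_pos)
    ultimately obtain N where N: "\<forall>m\<ge>N. \<forall>n\<ge>N. dist ((y \<circ> r) m) ((y \<circ> r) n) < \<epsilon> / (\<bar>M\<bar> + 1)"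
      unfolding Cauchy_def by blast
    define i where "i = r N"
    define j where "j = r (Suc N)"
    have ij: "i < j" using r unfolding i_def j_def strict_mono_def by simp
    have dij: "norm (y j - y i) < \<epsilon> / (\<bar>M\<bar> + 1)"
      using N[rule_format, of "Suc N" N] by (simp add: i_def j_def dist_norm)
    define s where "s = t i - t j"
    have tle: "t i \<le> \<delta>" using d by (auto simp: t_def field_simps)
    have s: "0 < s" "s < \<delta>" using tdec[OF ij] t(1)[of j] tle
      unfolding s_def by linarith+
    have "g s u = g s (g (t j) (y j))" using y by simp
    also have "\<dots> = g (t i) (y j)"
      using comp[of s "t j"] s t[of j] by (simp add: s_def)
    finally have gs: "g s u = g (t i) (y j)" .
    have "g s u - u = g (t i) (y j - y i)"
      using gs y(2)[of i] linear_diff[OF lin[of "t i"]] t[of i] by simp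
    hence "norm (g s u - u) \<le> M * norm (y j - y i)" using nb t[of i] by simp
    also have "\<dots> \<le> \<bar>M\<bar> * norm (y j - y i)" by (simp add: mult_right_mono)
    also have "\<dots> \<le> \<bar>M\<bar> * (\<epsilon> / (\<bar>M\<bar> + 1))"
      by (rule mult_left_mono) (use dij in auto)
    also have "\<dots> \<le> \<epsilon>" using e by (simp add: field_simps)
    finally show ?thesis using s by blast
  qed
  have normle: "norm u \<le> norm (u + v)" if u: "u \<in> V1" and v: "v \<in> V2" for u v
  proof (rule field_le_epsilon)
    fix e :: real assume e: "0 < e"
    define \<epsilon> where "\<epsilon> = e / (norm (u + v) + 1)"
    have ep: "\<epsilon> > 0" unfolding \<epsilon>_def
      by (rule divide_pos_pos) (use e in \<open>auto intro: add_nonneg_pos\<close>)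
    have "eventually (\<lambda>x. dist (f x) 1 < \<epsilon>) (at_right 0)"
      using tendstoD[OF flim[unfolded f0] ep] .
    then obtain b where b: "b > 0" "\<forall>y>0. y < b \<longrightarrow> dist (f y) 1 < \<epsilon>"
      unfolding eventually_at_right_field by auto
    obtain s where s: "0 < s" "s < min b 1" "norm (g s u - u) \<le> \<epsilon>"
      using key[OF u ep, of "min b 1"] b by auto
    have fs: "f s \<le> 1 + \<epsilon>" using b s by (auto simp: dist_real_def)
    have "g s (u + v) = g s u"
      using assms(10) s v linear_add[OF lin[of s]] by simp
    hence "norm (g s u) \<le> f s * norm (u + v)" using nbf[of s "u+v"] s by simp
    also have "\<dots> \<le> (1 + \<epsilon>) * norm (u + v)" using fs by (simp add: mult_right_mono)
    finally have h: "norm (g s u) \<le> (1 + \<epsilon>) * norm (u + v)" .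
    have "norm u \<le> norm (g s u) + norm (g s u - u)"
      using norm_triangle_sub[of u "g s u"] by (simp add: norm_minus_commute)
    also have "\<dots> \<le> (1 + \<epsilon>) * norm (u + v) + \<epsilon>" using h s by simp
    also have "\<dots> = norm (u + v) + \<epsilon> * (norm (u + v) + 1)" by (simp add: algebra_simps)
    also have "\<dots> = norm (u + v) + e"
    proof -
      have "norm (u + v) + 1 \<noteq> 0" using norm_ge_zero[of "u+v"] by linarith
      thus ?thesis unfolding \<epsilon>_def by simp
    qed
    finally show "norm u \<le> norm (u + v) + e" .
  qed
  show ?thesis
  proof (intro ballI)
    fix u v assume u: "u \<in> V1" and v: "v \<in> V2"
    show "inner u v = 0"
      by (rule orth_from_norm) (use normle u v assms(4) subspace_scale in blast)
  qed
qed

end
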